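(* Let $H$ be a complex Hilbert space, $\varphi,\psi:[0,1]\to\mathbb{R}$ continuous, $A\in\mathbb{B}(H)$ and $t\in[0,1]$. Then $$\omega_t^2(\varphi,\psi;A)\le\big(|\varphi(t)|^2+|\psi(t)|^2\big)\omega^2(A)+|\varphi(t)\psi(t)|\,\omega(A^2)+\frac12|\varphi(t)\psi(t)|\,\|AA^*+A^*A\|.$$
   Context: $S_1(H)$ is the unit sphere of $H$, $\omega(T)=\sup_{x\in S_1(H)}|\langle Tx,x\rangle|$, and $\omega_t(\varphi,\psi;A)=\sup_{x\in S_1(H)}|\langle(\varphi(t)A+\psi(t)A^* )x,x\rangle|$. *)

theory Defs
  imports "HOL-Analysis.Analysis"
begin

class scaleC = scaleR +
  fixes scaleC :: "complex \<Rightarrow> 'a \<Rightarrow> 'a" (infixr \<open>*\<^sub>C\<close> 75)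
  assumes scaleR_scaleC: "scaleR r = scaleC (complex_of_real r)"

class complex_vector = scaleC + real_vector +
  assumes scaleC_add_right: "a *\<^sub>C (x + y) = a *\<^sub>C x + a *\<^sub>C y"
    and scaleC_add_left: "(a + b) *\<^sub>C x = a *\<^sub>C x + b *\<^sub>C x"
    and scaleC_scaleC: "a *\<^sub>C (b *\<^sub>C x) = (a * b) *\<^sub>C x"
    and scaleC_one: "1 *\<^sub>C x = x"

class complex_normed_vector = complex_vector + real_normed_vector +
  assumes norm_scaleC: "norm (a *\<^sub>C x) = cmod a * norm x"

class complex_inner = complex_normed_vector +
  fixes cinner :: "'a \<Rightarrow> 'a \<Rightarrow> complex"
  assumes cinner_commute: "cinner x y = cnj (cinner y x)"
    and cinner_add_left: "cinner (x + y) z = cinner x z + cinner y z"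
    and cinner_scaleC_left: "cinner (a *\<^sub>C x) y = a * cinner x y"
    and cinner_ge_zero: "0 \<le> Re (cinner x x)"
    and cinner_eq_zero_iff: "cinner x x = 0 \<longleftrightarrow> x = 0"
    and norm_eq_sqrt_cinner: "norm x = sqrt (Re (cinner x x))"

class chilbert_space = complex_inner + complete_space

definition bounded_clinear :: "('a::complex_normed_vector \<Rightarrow> 'b::complex_normed_vector) \<Rightarrow> bool" where
  "bounded_clinear f \<longleftrightarrow> bounded_linear f \<and> (\<forall>c x. f (c *\<^sub>C x) = c *\<^sub>C f x)"

definition is_adjoint :: "('a::complex_inner \<Rightarrow> 'a) \<Rightarrow> ('a \<Rightarrow> 'a) \<Rightarrow> bool" where
  "is_adjoint A B \<longleftrightarrow> (\<forall>x y. cinner (A x) y = cinner x (B y))"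

text \<open>Numerical radius \<open>\<omega>(T) = sup_{x \<in> S_1(H)} |<Tx,x>|\<close>; the 0 is inserted only so that
  the supremum is well defined for the trivial space (it does not change the value otherwise).\<close>
definition numrad :: "('a::complex_inner \<Rightarrow> 'a) \<Rightarrow> real" where
  "numrad T = Sup (insert 0 ((\<lambda>x. cmod (cinner (T x) x)) ` {x. norm x = 1}))"

text \<open>\<open>\<omega>_t(\<phi>,\<psi>;A) = \<omega>(\<phi>(t) A + \<psi>(t) A^*)\<close>, with \<open>Astar\<close> the adjoint of \<open>A\<close>.\<close>
definition omega_t :: "real \<Rightarrow> (real \<Rightarrow> real) \<Rightarrow> (real \<Rightarrow> real) \<Rightarrow> ('a::complex_inner \<Rightarrow> 'a) \<Rightarrow> ('a \<Rightarrow> 'a) \<Rightarrow> real" where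
  "omega_t t \<phi> \<psi> A Astar = numrad (\<lambda>x. complex_of_real (\<phi> t) *\<^sub>C A x + complex_of_real (\<psi> t) *\<^sub>C Astar x)"

end

theory Submission
  imports Defs
begin

lemma ci_add_right: "cinner x (y + z) = cinner x y + cinner x z"
  by (metis cinner_add_left cinner_commute complex_cnj_add)

lemma ci_zero_left[simp]: "cinner 0 y = 0"
  by (metis add_cancel_left_left add_0 cinner_add_left)

lemma ci_zero_right[simp]: "cinner y 0 = 0"
  by (metis ci_zero_left cinner_commute complex_cnj_zero)

lemma ci_minus_left: "cinner (- x) y = - cinner x y"
  by (metis add.right_inverse ci_zero_left cinner_add_left eq_neg_iff_add_eq_0)

lemma ci_diff_left: "cinner (x - y) z = cinner x z - cinner y z"
  unfolding diff_conv_add_uminus cinner_add_left ci_minus_left ..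

lemma ci_minus_right: "cinner x (- y) = - cinner x y"
  by (metis ci_minus_left cinner_commute complex_cnj_minus)

lemma ci_diff_right: "cinner x (y - z) = cinner x y - cinner x z"
  unfolding diff_conv_add_uminus ci_add_right ci_minus_right ..

lemma ci_scaleC_right: "cinner x (a *\<^sub>C y) = cnj a * cinner x y"
  by (metis cinner_commute cinner_scaleC_left complex_cnj_mult)

lemma ci_self: "cinner x x = complex_of_real ((norm x)\<^sup>2)"
proof -
  have "Im (cinner x x) = Im (cnj (cinner x x))" using cinner_commute by metis
  then have "Im (cinner x x) = 0" by simp
  moreover have "Re (cinner x x) = (norm x)\<^sup>2"
    by (simp add: norm_eq_sqrt_cinner cinner_ge_zero)
  ultimately show ?thesis by (simp add: complex_eq_iff)
qed

lemma ci_self_Re: "Re (cinner x x) = (norm x)\<^sup>2"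
  by (simp add: ci_self)

lemma cauchy_schwarz: "cmod (cinner x y) \<le> norm x * norm y"
proof (cases "y = 0")
  case True then show ?thesis by simp
next
  case False
  define r where "r = (norm y)\<^sup>2"
  have r: "r > 0" using False by (simp add: r_def)
  define w where "w = cinner x y"
  define c where "c = w / complex_of_real r"
  have "0 \<le> Re (cinner (x - c *\<^sub>C y) (x - c *\<^sub>C y))" by (rule cinner_ge_zero)
  also have "cinner (x - c *\<^sub>C y) (x - c *\<^sub>C y)
      = cinner x x - cnj c * w - c * cnj w + c * cnj c * cinner y y"
  proof -
    have yx: "cinner y x = cnj w" unfolding w_def by (rule cinner_commute)
    show ?thesis
      unfolding ci_diff_left ci_diff_right cinner_scaleC_left ci_scaleC_right yx w_def[symmetric]
      by (simp add: algebra_simps)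
  qed
  also have "\<dots> = complex_of_real ((norm x)\<^sup>2 - (cmod w)\<^sup>2 / r)"
  proof -
    have ww: "cnj w * w = complex_of_real ((cmod w)\<^sup>2)" "w * cnj w = complex_of_real ((cmod w)\<^sup>2)"
      by (simp_all add: complex_norm_square[symmetric] mult.commute)
    have cc: "cnj c = cnj w / complex_of_real r" by (simp add: c_def)
    have rr: "complex_of_real r \<noteq> 0" using r by simp
    have "cnj c * w = (cnj w * w) / complex_of_real r" by (simp add: cc)
    also have "\<dots> = complex_of_real ((cmod w)\<^sup>2 / r)" by (simp add: ww)
    finally have 1: "cnj c * w = complex_of_real ((cmod w)\<^sup>2 / r)" .
    have "c * cnj w = (w * cnj w) / complex_of_real r" by (simp add: c_def)
    also have "\<dots> = complex_of_real ((cmod w)\<^sup>2 / r)" by (simp add: ww)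
    finally have 2: "c * cnj w = complex_of_real ((cmod w)\<^sup>2 / r)" .
    have "c * cnj c * cinner y y = (w * cnj w) / complex_of_real r"
      unfolding ci_self r_def[symmetric] cc c_def using rr by (simp add: field_simps power2_eq_square)
    also have "\<dots> = complex_of_real ((cmod w)\<^sup>2 / r)" by (simp add: ww)
    finally have 3: "c * cnj c * cinner y y = complex_of_real ((cmod w)\<^sup>2 / r)" .
    note 1 2 3
    then show ?thesis by (simp add: ci_self)
  qed
  finally have "(cmod w)\<^sup>2 \<le> (norm x)\<^sup>2 * r" using r by (simp add: field_simps)
  then have "(cmod w)\<^sup>2 \<le> (norm x * norm y)\<^sup>2" by (simp add: r_def power_mult_distrib)
  then show ?thesis unfolding w_def
    using abs_le_square_iff by fastforce
qed


lemma ci_eq_zero_self: "(\<And>u. cinner u d = 0) \<Longrightarrow> d = 0"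
  using cinner_eq_zero_iff by blast

lemma adj_blin:
  assumes A: "bounded_linear A" and adj: "is_adjoint A B"
  shows "bounded_linear B"
proof -
  have adj': "\<And>u y. cinner (A u) y = cinner u (B y)" using adj unfolding is_adjoint_def by blast
  have add: "B (y + z) = B y + B z" for y z
  proof -
    have "cinner u (B (y + z) - (B y + B z)) = 0" for u
      unfolding ci_diff_right ci_add_right adj'[symmetric] by simp
    then show ?thesis by (metis ci_eq_zero_self eq_iff_diff_eq_0)
  qed
  have sc: "B (r *\<^sub>R y) = r *\<^sub>R B y" for r y
  proof -
    have "cinner u (B (r *\<^sub>R y) - r *\<^sub>R B y) = 0" for u
      unfolding ci_diff_right adj'[symmetric] scaleR_scaleC ci_scaleC_right by simp
    then show ?thesis by (metis ci_eq_zero_self eq_iff_diff_eq_0)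
  qed
  obtain K where K: "K > 0" "\<And>x. norm (A x) \<le> norm x * K"
    using bounded_linear.pos_bounded[OF A] by blast
  have bd: "norm (B y) \<le> norm y * K" for y
  proof -
    have "(norm (B y))\<^sup>2 = Re (cinner (A (B y)) y)" by (simp add: adj' ci_self_Re)
    also have "\<dots> \<le> cmod (cinner (A (B y)) y)" by (rule complex_Re_le_cmod)
    also have "\<dots> \<le> norm (A (B y)) * norm y" by (rule cauchy_schwarz)
    also have "\<dots> \<le> norm (B y) * K * norm y" using K(2) by (simp add: mult_right_mono)
    finally have "(norm (B y))\<^sup>2 \<le> norm (B y) * (norm y * K)" by (simp add: ac_simps)
    then show ?thesis
      using K(1) by (cases "norm (B y) = 0") (auto simp: power2_eq_square)
  qed
  show ?thesis by (rule bounded_linear_intro[OF add sc bd])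
qed

lemma buzano:
  assumes e: "norm e = 1"
  shows "2 * cmod (cinner a e * cinner e b) \<le> cmod (cinner a b) + norm a * norm b"
proof -
  define c where "c = cinner a e"
  define v where "v = (2 * c) *\<^sub>C e - a"
  have ea: "cinner e a = cnj c" unfolding c_def by (rule cinner_commute)
  have ee: "cinner e e = 1" using e by (simp add: ci_self)
  have "cinner v v = 4 * (c * cnj c) - 2 * (c * cnj c) - 2 * (c * cnj c) + cinner a a"
    unfolding v_def ci_diff_left ci_diff_right cinner_scaleC_left ci_scaleC_right ee ea c_def[symmetric]
    by (simp add: algebra_simps)
  then have "cinner v v = cinner a a" by simp
  then have nv: "norm v = norm a" by (simp add: norm_eq_sqrt_cinner)
  have vb: "cinner v b = 2 * (c * cinner e b) - cinner a b"
    unfolding v_def ci_diff_left cinner_scaleC_left by simp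
  have "2 * cmod (c * cinner e b) = cmod (cinner v b + cinner a b)"
    unfolding vb by (simp add: norm_mult)
  also have "\<dots> \<le> cmod (cinner v b) + cmod (cinner a b)" by (rule norm_triangle_ineq)
  also have "\<dots> \<le> norm a * norm b + cmod (cinner a b)"
    using cauchy_schwarz[of v b] nv by simp
  finally show ?thesis unfolding c_def by simp
qed

lemma numrad_le:
  assumes "0 \<le> B" "\<And>x. norm x = 1 \<Longrightarrow> cmod (cinner (T x) x) \<le> B"
  shows "numrad T \<le> B"
  unfolding numrad_def using assms by (intro cSup_least) auto

lemma numrad_ge:
  assumes "\<And>x. norm x = 1 \<Longrightarrow> cmod (cinner (T x) x) \<le> B" "norm x = 1"
  shows "cmod (cinner (T x) x) \<le> numrad T" "0 \<le> numrad T"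
proof -
  have bdd: "bdd_above (insert 0 ((\<lambda>x. cmod (cinner (T x) x)) ` {x. norm x = 1}))"
    using assms(1) by (intro bdd_aboveI[where M="max 0 B"]) force
  show "cmod (cinner (T x) x) \<le> numrad T" unfolding numrad_def
    using assms(2) by (intro cSup_upper[OF _ bdd]) auto
  show "0 \<le> numrad T" unfolding numrad_def
    by (intro cSup_upper[OF _ bdd]) auto
qed

lemma bl_cinner_le:
  assumes "bounded_linear T" "norm y = 1"
  shows "cmod (cinner (T y) y) \<le> onorm T"
proof -
  have "cmod (cinner (T y) y) \<le> norm (T y) * norm y" by (rule cauchy_schwarz)
  also have "\<dots> \<le> onorm T * norm y * norm y"
    using onorm[OF assms(1)] by (simp add: mult_right_mono)
  finally show ?thesis using assms(2) by simp
qed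

lemma numrad_bl:
  assumes "bounded_linear T"
  shows "norm x = 1 \<Longrightarrow> cmod (cinner (T x) x) \<le> numrad T" "0 \<le> numrad T"
proof -
  have bdd: "bdd_above (insert 0 ((\<lambda>x. cmod (cinner (T x) x)) ` {x. norm x = 1}))"
    using bl_cinner_le[OF assms] by (intro bdd_aboveI[where M="max 0 (onorm T)"]) force
  show "norm x = 1 \<Longrightarrow> cmod (cinner (T x) x) \<le> numrad T" unfolding numrad_def
    by (intro cSup_upper[OF _ bdd]) auto
  show "0 \<le> numrad T" unfolding numrad_def
    by (intro cSup_upper[OF _ bdd]) auto
qed

lemma numrad_ge0:
  assumes "\<And>x. norm x = 1 \<Longrightarrow> cmod (cinner (T x) x) \<le> B"
  shows "0 \<le> numrad T"
proof -
  have bdd: "bdd_above (insert 0 ((\<lambda>x. cmod (cinner (T x) x)) ` {x. norm x = 1}))"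
    using assms(1) by (intro bdd_aboveI[where M="max 0 B"]) force
  show "0 \<le> numrad T" unfolding numrad_def
    by (intro cSup_upper[OF _ bdd]) auto
qed

lemma cplx_id: "(cmod (complex_of_real a * z + complex_of_real b * cnj z))\<^sup>2
   = (a\<^sup>2 + b\<^sup>2) * (cmod z)\<^sup>2 + 2 * a * b * Re (z * z)"
  unfolding cmod_power2 by (simp add: power2_eq_square algebra_simps)

theorem theorem3p11:
  fixes A Astar :: "'a::chilbert_space \<Rightarrow> 'a"
    and \<phi> \<psi> :: "real \<Rightarrow> real" and t :: real
  assumes "continuous_on {0..1} \<phi>" and "continuous_on {0..1} \<psi>"
    and "bounded_clinear A" and "is_adjoint A Astar"
    and "t \<in> {0..1}"
  shows "(omega_t t \<phi> \<psi> A Astar)\<^sup>2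
    \<le> (\<bar>\<phi> t\<bar>\<^sup>2 + \<bar>\<psi> t\<bar>\<^sup>2) * (numrad A)\<^sup>2 + \<bar>\<phi> t * \<psi> t\<bar> * numrad (A \<circ> A)
      + 1/2 * \<bar>\<phi> t * \<psi> t\<bar> * onorm (\<lambda>x. A (Astar x) + Astar (A x))"
proof -
  define a where "a = \<phi> t"
  define b where "b = \<psi> t"
  define S where "S = (\<lambda>x. A (Astar x) + Astar (A x))"
  define T where "T = (\<lambda>x. complex_of_real a *\<^sub>C A x + complex_of_real b *\<^sub>C Astar x)"
  define R where "R = (\<bar>a\<bar>\<^sup>2 + \<bar>b\<bar>\<^sup>2) * (numrad A)\<^sup>2 + \<bar>a * b\<bar> * numrad (A \<circ> A)
      + 1/2 * \<bar>a * b\<bar> * onorm S"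
  have A: "bounded_linear A" using assms(3) unfolding bounded_clinear_def by blast
  have adj: "\<And>u y. cinner (A u) y = cinner u (Astar y)" using assms(4) unfolding is_adjoint_def by blast
  have As: "bounded_linear Astar" by (rule adj_blin[OF A assms(4)])
  have AA: "bounded_linear (A \<circ> A)" using A by (simp add: bounded_linear_compose comp_def)
  have Sb: "bounded_linear S" unfolding S_def
    by (intro bounded_linear_add bounded_linear_compose[OF A As] bounded_linear_compose[OF As A])
  have nA: "0 \<le> numrad A" using numrad_bl(2)[OF A] .
  have nAA: "0 \<le> numrad (A \<circ> A)" using numrad_bl(2)[OF AA] .
  have nS: "0 \<le> onorm S" using onorm_pos_le[OF Sb] .
  have R0: "0 \<le> R" unfolding R_def using nA nAA nS by simp
  have key: "(cmod (cinner (T x) x))\<^sup>2 \<le> R" if x: "norm x = 1" for x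
  proof -
    define z where "z = cinner (A x) x"
    have Tz: "cinner (T x) x = complex_of_real a * z + complex_of_real b * cnj z"
      unfolding T_def cinner_add_left cinner_scaleC_left z_def
      by (metis adj cinner_commute)
    have zz: "2 * cmod (z * z) \<le> cmod (cinner ((A \<circ> A) x) x) + norm (A x) * norm (Astar x)"
      using buzano[OF x, of "A x" "Astar x"] by (simp add: adj z_def)
    have n1: "(norm (A x))\<^sup>2 = Re (cinner (Astar (A x)) x)"
    proof -
      have "(norm (A x))\<^sup>2 = Re (cinner x (Astar (A x)))" unfolding adj[symmetric] ci_self_Re ..
      also have "\<dots> = Re (cnj (cinner (Astar (A x)) x))" by (metis cinner_commute)
      finally show ?thesis by simp
    qed
    have n2: "(norm (Astar x))\<^sup>2 = Re (cinner (A (Astar x)) x)"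
      unfolding adj ci_self_Re ..
    have Sx: "norm (A x) * norm (Astar x) \<le> onorm S / 2"
    proof -
      have "2 * (norm (A x) * norm (Astar x)) \<le> (norm (A x))\<^sup>2 + (norm (Astar x))\<^sup>2"
        using sum_squares_bound[of "norm (A x)" "norm (Astar x)"] by (simp add: mult.assoc)
      also have "\<dots> = Re (cinner (S x) x)" unfolding n1 n2 S_def cinner_add_left by simp
      also have "\<dots> \<le> cmod (cinner (S x) x)" by (rule complex_Re_le_cmod)
      also have "\<dots> \<le> onorm S" using bl_cinner_le[OF Sb x] .
      finally show ?thesis by simp
    qed
    have zA: "(cmod z)\<^sup>2 \<le> (numrad A)\<^sup>2"
      using numrad_bl(1)[OF A x] unfolding z_def by (intro power_mono) auto
    have zAA: "cmod (cinner ((A \<circ> A) x) x) \<le> numrad (A \<circ> A)" using numrad_bl(1)[OF AA x] .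
    have "2 * a * b * Re (z * z) \<le> \<bar>a * b\<bar> * (2 * cmod (z * z))"
    proof -
      have "2 * a * b * Re (z * z) \<le> \<bar>2 * a * b * Re (z * z)\<bar>" by simp
      also have "\<dots> = \<bar>a * b\<bar> * (2 * \<bar>Re (z * z)\<bar>)" by (simp add: abs_mult)
      also have "\<dots> \<le> \<bar>a * b\<bar> * (2 * cmod (z * z))"
        using abs_Re_le_cmod[of "z * z"] by (intro mult_left_mono) (assumption | simp)+
      finally show ?thesis .
    qed
    also have "\<dots> \<le> \<bar>a * b\<bar> * (numrad (A \<circ> A) + onorm S / 2)"
      using zz zAA Sx by (intro mult_left_mono) auto
    finally have cross: "2 * a * b * Re (z * z) \<le> \<bar>a * b\<bar> * (numrad (A \<circ> A) + onorm S / 2)" .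
    have sq: "(a\<^sup>2 + b\<^sup>2) * (cmod z)\<^sup>2 \<le> (a\<^sup>2 + b\<^sup>2) * (numrad A)\<^sup>2"
      using zA by (intro mult_left_mono) auto
    show ?thesis unfolding Tz cplx_id R_def using sq cross by (simp add: algebra_simps)
  qed
  have le: "numrad T \<le> sqrt R"
    using key R0 by (intro numrad_le) (auto intro: real_le_rsqrt)
  have ge: "0 \<le> numrad T"
    using key by (intro numrad_ge0[where B="sqrt R"]) (auto intro: real_le_rsqrt)
  have "(numrad T)\<^sup>2 \<le> R"
    using power_mono[OF le ge, of 2] R0 by simp
  then show ?thesis unfolding omega_t_def R_def S_def T_def a_def b_def .
qed

end
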